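(* For every integer $n\ge 2$, the shift graph $S_n$ has symmetric difference at most $2$.
   Context: The shift graph $S_n$ has vertex set $\{(i,j): 1\le i<j\le n\}$, with $(i,j)$ adjacent to $(k,\ell)$ whenever $j=k$ or $i=\ell$. For a graph $G$ and distinct vertices $u,v$, $\mathrm{sd}_G(u,v) := |(N_G(u)\setminus\{v\}) \triangle (N_G(v)\setminus\{u\})|$. The symmetric difference of $G$ is $\max_H\min_{u\ne v\in V(H)}\mathrm{sd}_H(u,v)$, with $H$ ranging over induced subgraphs of $G$ having at least two vertices. *)

theory Defs
  imports Main
begin

text \<open>A (finite simple) graph is given by a vertex set V and an adjacency relation E
  (symmetric, irreflexive on V).  Induced subgraphs are given by vertex subsets W.\<close>

definition nbhd :: "'a set \<Rightarrow> ('a \<Rightarrow> 'a \<Rightarrow> bool) \<Rightarrow> 'a \<Rightarrow> 'a set" where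
  "nbhd W E u = {w \<in> W. E u w}"

definition sd :: "'a set \<Rightarrow> ('a \<Rightarrow> 'a \<Rightarrow> bool) \<Rightarrow> 'a \<Rightarrow> 'a \<Rightarrow> nat" where
  "sd W E u v = card (((nbhd W E u - {v}) - (nbhd W E v - {u})) \<union>
                      ((nbhd W E v - {u}) - (nbhd W E u - {v})))"

definition min_sd :: "'a set \<Rightarrow> ('a \<Rightarrow> 'a \<Rightarrow> bool) \<Rightarrow> nat" where
  "min_sd W E = Min {sd W E u v | u v. u \<in> W \<and> v \<in> W \<and> u \<noteq> v}"

text \<open>Symmetric difference of G = (V,E): max over induced subgraphs with at least two vertices
  (convention: 0 if there is no such induced subgraph, e.g. S_2 has a single vertex).\<close>
definition symm_diff :: "'a set \<Rightarrow> ('a \<Rightarrow> 'a \<Rightarrow> bool) \<Rightarrow> nat" where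
  "symm_diff V E = (let F = {min_sd W E | W. W \<subseteq> V \<and> 2 \<le> card W}
                    in if F = {} then 0 else Max F)"

definition shift_vertices :: "nat \<Rightarrow> (nat \<times> nat) set" where
  "shift_vertices n = {(i, j). 1 \<le> i \<and> i < j \<and> j \<le> n}"

definition shift_adj :: "(nat \<times> nat) \<Rightarrow> (nat \<times> nat) \<Rightarrow> bool" where
  "shift_adj p q = (snd p = fst q \<or> fst p = snd q)"

end

theory Submission
  imports Defs
begin

definition ins :: "(nat \<times> nat) set \<Rightarrow> nat \<Rightarrow> (nat \<times> nat) set" where
  "ins W x = {w \<in> W. snd w = x}"
definition outs :: "(nat \<times> nat) set \<Rightarrow> nat \<Rightarrow> (nat \<times> nat) set" where
  "outs W x = {w \<in> W. fst w = x}"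

lemma nb: "nbhd W shift_adj u = outs W (snd u) \<union> ins W (fst u)"
  by (auto simp: nbhd_def shift_adj_def ins_def outs_def)

lemma sd_sub:
  assumes "finite A" "finite B"
    and "((nbhd W E u - {v}) - (nbhd W E v - {u})) \<union>
         ((nbhd W E v - {u}) - (nbhd W E u - {v})) \<subseteq> A \<union> B"
    and "card A \<le> 1" "card B \<le> 1"
  shows "sd W E u v \<le> 2"
proof -
  have "sd W E u v \<le> card (A \<union> B)"
    unfolding sd_def using assms by (intro card_mono) auto
  also have "\<dots> \<le> card A + card B" by (rule card_Un_le)
  finally show ?thesis using assms by linarith
qed

lemma caseA:
  assumes "finite W" "(k,x) \<in> W" "(k',x) \<in> W" "k \<noteq> k'" "k < x" "k' < x"
    "card (ins W k) \<le> 1" "card (ins W k') \<le> 1"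
  shows "sd W shift_adj (k,x) (k',x) \<le> 2"
  apply (rule sd_sub[where A="ins W k" and B="ins W k'"])
  using assms by (auto simp: nb ins_def outs_def)

lemma caseB:
  assumes "finite W" "(x,j) \<in> W" "(x,j') \<in> W" "j \<noteq> j'" "x < j" "x < j'"
    "card (outs W j) \<le> 1" "card (outs W j') \<le> 1"
  shows "sd W shift_adj (x,j) (x,j') \<le> 2"
  apply (rule sd_sub[where A="outs W j" and B="outs W j'"])
  using assms by (auto simp: nb ins_def outs_def)

lemma card_nb:
  assumes "finite W" "\<And>y. card (ins W y) \<le> 1" "\<And>y. card (outs W y) \<le> 1"
  shows "card (nbhd W shift_adj u) \<le> 2"
proof -
  have "card (nbhd W shift_adj u) \<le> card (outs W (snd u)) + card (ins W (fst u))"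
    unfolding nb by (rule card_Un_le)
  then show ?thesis using assms(2,3)[of "snd u"] assms(2)[of "fst u"] assms(3)[of "snd u"] by linarith
qed

lemma fin_nb: "finite W \<Longrightarrow> finite (nbhd W E u)"
  by (simp add: nbhd_def)

lemma step3:
  assumes "finite W" "\<And>y. card (ins W y) \<le> 1" "\<And>y. card (outs W y) \<le> 1"
    "u \<in> W" "v \<in> W" "v \<in> nbhd W shift_adj u \<or> nbhd W shift_adj u = {}"
  shows "sd W shift_adj u v \<le> 2"
  using assms(6)
proof
  assume a: "v \<in> nbhd W shift_adj u"
  then have b: "u \<in> nbhd W shift_adj v" using assms(4)
    by (auto simp: nbhd_def shift_adj_def)
  have c1: "card (nbhd W shift_adj u - {v}) \<le> 1"
    using card_nb[OF assms(1-3), of u] a fin_nb[OF assms(1)] by (simp add: card_Diff_singleton)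
  have c2: "card (nbhd W shift_adj v - {u}) \<le> 1"
    using card_nb[OF assms(1-3), of v] b fin_nb[OF assms(1)] by (simp add: card_Diff_singleton)
  show ?thesis
    by (rule sd_sub[OF _ _ _ c1 c2]) (auto simp: fin_nb assms(1))
next
  assume a: "nbhd W shift_adj u = {}"
  have "sd W shift_adj u v \<le> card (nbhd W shift_adj v)"
    unfolding sd_def a using fin_nb[OF assms(1)] by (intro card_mono) auto
  then show ?thesis using card_nb[OF assms(1-3), of v] by linarith
qed

lemma two_elems:
  assumes "2 \<le> card A"
  obtains a b where "a \<in> A" "b \<in> A" "a \<noteq> b"
proof -
  have "finite A" using assms by (metis card.infinite not_numeral_le_zero)
  obtain a where a: "a \<in> A" using assms by fastforce
  have "card (A - {a}) \<ge> 1" using assms a \<open>finite A\<close> by (simp add: card_Diff_singleton)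
  then have "A - {a} \<noteq> {}" by (metis card.empty not_one_le_zero)
  then obtain b where "b \<in> A - {a}" by blast
  then show ?thesis using a that by blast
qed

lemma key:
  assumes fin: "finite W" and sub: "W \<subseteq> shift_vertices n" and c: "2 \<le> card W"
  shows "\<exists>u v. u \<in> W \<and> v \<in> W \<and> u \<noteq> v \<and> sd W shift_adj u v \<le> 2"
proof (rule ccontr)
  assume nc: "\<not> ?thesis"
  have lt: "\<And>w. w \<in> W \<Longrightarrow> fst w < snd w \<and> snd w \<le> n"
    using sub by (auto simp: shift_vertices_def)
  have I: "card (ins W y) \<le> 1" for y
  proof (rule ccontr)
    assume "\<not> card (ins W y) \<le> 1"
    then have "2 \<le> card (ins W y)" by linarith
    then have ex: "\<exists>y. 2 \<le> card (ins W y)" by blast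
    define y0 where "y0 = (LEAST y. 2 \<le> card (ins W y))"
    have y0: "2 \<le> card (ins W y0)" unfolding y0_def using ex by (rule LeastI_ex)
    have below: "\<And>z. z < y0 \<Longrightarrow> card (ins W z) \<le> 1"
      using not_less_Least unfolding y0_def by fastforce
    obtain w1 w2 where w: "w1 \<in> ins W y0" "w2 \<in> ins W y0" "w1 \<noteq> w2"
      using two_elems[OF y0] by blast
    obtain k where k: "w1 = (k, y0)" "(k,y0) \<in> W" using w(1) by (cases w1) (auto simp: ins_def)
    obtain k' where k': "w2 = (k', y0)" "(k',y0) \<in> W" using w(2) by (cases w2) (auto simp: ins_def)
    have "k < y0" "k' < y0" using lt[OF k(2)] lt[OF k'(2)] by auto
    then have "sd W shift_adj (k,y0) (k',y0) \<le> 2"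
      using caseA[OF fin k(2) k'(2) _ \<open>k < y0\<close> \<open>k' < y0\<close>] w(3) k k' below by auto
    then show False using nc k k' w(3) by blast
  qed
  have O: "card (outs W y) \<le> 1" for y
  proof (rule ccontr)
    assume "\<not> card (outs W y) \<le> 1"
    define Y where "Y = {y. 2 \<le> card (outs W y)}"
    have "y \<in> Y" using \<open>\<not> card (outs W y) \<le> 1\<close> by (simp add: Y_def)
    have Ysub: "Y \<subseteq> {..n}"
    proof
      fix z assume "z \<in> Y"
      then have "outs W z \<noteq> {}" by (auto simp: Y_def)
      then obtain w where "w \<in> W" "fst w = z" by (auto simp: outs_def)
      then show "z \<in> {..n}" using lt by fastforce
    qed
    then have fY: "finite Y" by (rule finite_subset) simp
    define y0 where "y0 = Max Y"
    have y0Y: "y0 \<in> Y" using fY \<open>y \<in> Y\<close> unfolding y0_def by (intro Max_in) auto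
    then have y0: "2 \<le> card (outs W y0)" by (simp add: Y_def)
    have above: "\<And>z. y0 < z \<Longrightarrow> card (outs W z) \<le> 1"
    proof -
      fix z assume "y0 < z"
      then have "z \<notin> Y" using fY y0_def Max_ge leD by blast
      then show "card (outs W z) \<le> 1" by (simp add: Y_def)
    qed
    obtain w1 w2 where w: "w1 \<in> outs W y0" "w2 \<in> outs W y0" "w1 \<noteq> w2"
      using two_elems[OF y0] by blast
    obtain k where k: "w1 = (y0, k)" "(y0,k) \<in> W" using w(1) by (cases w1) (auto simp: outs_def)
    obtain k' where k': "w2 = (y0, k')" "(y0,k') \<in> W" using w(2) by (cases w2) (auto simp: outs_def)
    have "y0 < k" "y0 < k'" using lt[OF k(2)] lt[OF k'(2)] by auto
    then have "sd W shift_adj (y0,k) (y0,k') \<le> 2"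
      using caseB[OF fin k(2) k'(2) _ \<open>y0 < k\<close> \<open>y0 < k'\<close>] w(3) k k' above by auto
    then show False using nc k k' w(3) by blast
  qed
  obtain u v where uv: "u \<in> W" "v \<in> W" "u \<noteq> v" using two_elems[OF c] by blast
  show False
  proof (cases "nbhd W shift_adj u = {}")
    case True
    then show False using step3[OF fin I O uv(1,2)] uv nc by blast
  next
    case False
    then obtain x where x: "x \<in> nbhd W shift_adj u" by blast
    then have "x \<in> W" "x \<noteq> u" using lt[OF uv(1)]
      by (auto simp: nbhd_def shift_adj_def)
    then show False using step3[OF fin I O uv(1) \<open>x \<in> W\<close>] x uv nc by blast
  qed
qed

theorem mainTheorem12:
  fixes n :: nat
  assumes "n \<ge> 2"
  shows "symm_diff (shift_vertices n) shift_adj \<le> 2"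
proof -
  have finV: "finite (shift_vertices n)"
    by (rule finite_subset[of _ "{..n} \<times> {..n}"]) (auto simp: shift_vertices_def)
  define F where "F = {min_sd W shift_adj | W. W \<subseteq> shift_vertices n \<and> 2 \<le> card W}"
  have finF: "finite F"
  proof -
    have "F \<subseteq> (\<lambda>W. min_sd W shift_adj) ` Pow (shift_vertices n)"
      unfolding F_def by auto
    then show ?thesis using finV by (meson finite_Pow_iff finite_imageI finite_subset)
  qed
  have le: "m \<le> 2" if "m \<in> F" for m
  proof -
    obtain W where W: "m = min_sd W shift_adj" "W \<subseteq> shift_vertices n" "2 \<le> card W"
      using \<open>m \<in> F\<close> unfolding F_def by blast
    have finW: "finite W" using W(2) finV finite_subset by blast
    obtain u v where uv: "u \<in> W" "v \<in> W" "u \<noteq> v" "sd W shift_adj u v \<le> 2"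
      using key[OF finW W(2,3)] by blast
    define S where "S = {sd W shift_adj u v | u v. u \<in> W \<and> v \<in> W \<and> u \<noteq> v}"
    have "S \<subseteq> (\<lambda>(u,v). sd W shift_adj u v) ` (W \<times> W)" unfolding S_def by auto
    then have finS: "finite S" using finW by (meson finite_SigmaI finite_imageI finite_subset)
    have inS: "sd W shift_adj u v \<in> S" unfolding S_def using uv by blast
    have "Min S \<le> sd W shift_adj u v" using finS inS by (rule Min_le)
    then show ?thesis using W(1) uv(4) unfolding min_sd_def S_def[symmetric] by linarith
  qed
  show ?thesis
    unfolding symm_diff_def Let_def F_def[symmetric]
    using finF le by (auto simp: Max_le_iff)
qed

end
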